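(* Let $k\ge1$ and $\delta\notin I_k=\{-\frac{p}{2(n+1)}:p\in\{k-1,\dots,2k-2\}\}$. Define $s_{k-1}:R^{k-1}\to R^k$ by $s_{k-1}(S)=-\sum_{l=1}^kb_{k,l}\,X^l\big(i(\alpha)^{l-1}(S)\big)$, where $b_{k,l}=\big(\prod_{j=1}^l(-r(j,k-j))\big)^{-1}$. Then $i(\alpha)\circ s_{k-1}=\mathrm{Id}$ on $R^{k-1}$.
   Context: Let $n\ge1$, $M=\mathbb{R}^{2n+1}$ with coordinates $(q^1,\dots,q^n,p^1,\dots,p^n,t)$. For $\mu\in\mathbb{R}$, $\mathcal{S}^k_\mu$ denotes the space of smooth functions $S(x,\xi)$ on $M\times\mathbb{R}^{2n+1}$ homogeneous polynomial of degree $k$ in $\xi=(\xi_{q^1},\dots,\xi_{q^n},\xi_{p^1},\dots,\xi_{p^n},\xi_t)$. Fix $\delta\in\mathbb{R}$ and set $R^k=\mathcal{S}^k_{\delta+\frac{k}{n+1}}$ for $k\ge0$, $R^{j}=0$ for $j<0$. Let $E_s=\sum_i(p^i\partial_{p^i}+q^i\partial_{q^i})$, $\langle E_s,\xi\rangle=\sum_i(p^i\xi_{p^i}+q^i\xi_{q^i})$, $D(S)=\sum_i(\xi_{q^i}\partial_{p^i}S-\xi_{p^i}\partial_{q^i}S)+\xi_tE_s(S)-\langle E_s,\xi\rangle\partial_tS$. Operators: $i(\alpha):R^k\to R^{k-1}$, $i(\alpha)(S)=\frac12\big(\sum_i(p^i\partial_{\xi_{q^i}}S-q^i\partial_{\xi_{p^i}}S)-\partial_{\xi_t}S\big)$;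 $X:R^k\to R^{k+1}$, $X(S)=D(S)+(2(n+1)\delta+k)\xi_tS$. Set $r(l,k)=-\frac{l}{2}\big(2(n+1)\delta+2k+l-1\big)$ (for $\delta\notin I_k$ the numbers $r(j,k-j)$, $1\le j\le k$, are nonzero). *)

theory Defs
  imports "HOL-Analysis.Analysis"
begin

text \<open>Points of M = R^(2n+1) with coordinates (q^1..q^n, p^1..p^n, t); n = CARD('n).
  The same type is used for the dual variable xi = (xi_q, xi_p, xi_t).\<close>
type_synonym 'n pt = "(real^'n) \<times> (real^'n) \<times> real"
type_synonym 'n sym = "'n pt \<Rightarrow> 'n pt \<Rightarrow> real"

definition qc :: "'n::finite pt \<Rightarrow> 'n \<Rightarrow> real" where "qc x i = fst x $ i"
definition pc :: "'n::finite pt \<Rightarrow> 'n \<Rightarrow> real" where "pc x i = fst (snd x) $ i"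
definition tc :: "'n::finite pt \<Rightarrow> real" where "tc x = snd (snd x)"

definition eq :: "'n::finite \<Rightarrow> 'n pt" where "eq i = (axis i 1, 0, 0)"
definition ep :: "'n::finite \<Rightarrow> 'n pt" where "ep i = (0, axis i 1, 0)"
definition et :: "'n::finite pt" where "et = (0, 0, 1)"

definition dX :: "'n::finite pt \<Rightarrow> 'n sym \<Rightarrow> 'n sym" where
  "dX v S = (\<lambda>x xi. deriv (\<lambda>h. S (x + h *\<^sub>R v) xi) 0)"
definition dXi :: "'n::finite pt \<Rightarrow> 'n sym \<Rightarrow> 'n sym" where
  "dXi v S = (\<lambda>x xi. deriv (\<lambda>h. S x (xi + h *\<^sub>R v)) 0)"

fun iter_pd :: "'a list \<Rightarrow> ('a::real_normed_vector \<Rightarrow> real) \<Rightarrow> 'a \<Rightarrow> real" where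
  "iter_pd [] f = f"
| "iter_pd (v # vs) f = (\<lambda>z. deriv (\<lambda>h. iter_pd vs f (z + h *\<^sub>R v)) 0)"

definition smooth :: "('a::euclidean_space \<Rightarrow> real) \<Rightarrow> bool" where
  "smooth f \<longleftrightarrow> (\<forall>vs. set vs \<subseteq> Basis \<longrightarrow>
      continuous_on UNIV (iter_pd vs f) \<and>
      (\<forall>b\<in>Basis. \<forall>z. (\<lambda>h. iter_pd vs f (z + h *\<^sub>R b)) differentiable (at 0)))"

definition multiidx :: "nat \<Rightarrow> ('n::finite pt \<Rightarrow> nat) set" where
  "multiidx k = {\<alpha>. (\<forall>b. b \<notin> Basis \<longrightarrow> \<alpha> b = 0) \<and> (\<Sum>b\<in>Basis. \<alpha> b) = k}"

definition monom :: "('n::finite pt \<Rightarrow> nat) \<Rightarrow> 'n pt \<Rightarrow> real" where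
  "monom \<alpha> xi = (\<Prod>b\<in>Basis. (xi \<bullet> b) ^ (\<alpha> b))"

definition hom_poly :: "nat \<Rightarrow> 'n::finite sym \<Rightarrow> bool" where
  "hom_poly k S \<longleftrightarrow> (\<exists>c. \<forall>x xi. S x xi = (\<Sum>\<alpha>\<in>multiidx k. c \<alpha> x * monom \<alpha> xi))"

text \<open>R^k = S^k_{delta + k/(n+1)} as a space of functions (the weight only affects the action).\<close>
definition Rsp :: "nat \<Rightarrow> 'n::finite sym set" where
  "Rsp k = {S. smooth (\<lambda>(x, xi). S x xi) \<and> hom_poly k S}"

definition Es :: "'n::finite sym \<Rightarrow> 'n sym" where
  "Es S = (\<lambda>x xi. \<Sum>i\<in>UNIV. pc x i * dX (ep i) S x xi + qc x i * dX (eq i) S x xi)"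

definition Es_xi :: "'n::finite pt \<Rightarrow> 'n pt \<Rightarrow> real" where
  "Es_xi x xi = (\<Sum>i\<in>UNIV. pc x i * pc xi i + qc x i * qc xi i)"

definition Dop :: "'n::finite sym \<Rightarrow> 'n sym" where
  "Dop S = (\<lambda>x xi. (\<Sum>i\<in>UNIV. qc xi i * dX (ep i) S x xi - pc xi i * dX (eq i) S x xi)
       + tc xi * Es S x xi - Es_xi x xi * dX et S x xi)"

definition Xop :: "real \<Rightarrow> nat \<Rightarrow> 'n::finite sym \<Rightarrow> 'n sym" where
  "Xop \<delta> k S = (\<lambda>x xi. Dop S x xi
       + (2 * (real CARD('n) + 1) * \<delta> + real k) * tc xi * S x xi)"

text \<open>Xpow d m l S = X^l S for S in R^m (X applied successively on R^m, ..., R^(m+l-1)).\<close>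
primrec Xpow :: "real \<Rightarrow> nat \<Rightarrow> nat \<Rightarrow> 'n::finite sym \<Rightarrow> 'n sym" where
  "Xpow \<delta> m 0 S = S"
| "Xpow \<delta> m (Suc l) S = Xop \<delta> (m + l) (Xpow \<delta> m l S)"

definition ia :: "'n::finite sym \<Rightarrow> 'n sym" where
  "ia S = (\<lambda>x xi. (1/2) * ((\<Sum>i\<in>UNIV. pc x i * dXi (eq i) S x xi - qc x i * dXi (ep i) S x xi)
       - dXi et S x xi))"

definition rr :: "nat \<Rightarrow> real \<Rightarrow> nat \<Rightarrow> nat \<Rightarrow> real" where
  "rr n \<delta> l k = - (real l / 2) * (2 * (real n + 1) * \<delta> + 2 * real k + real l - 1)"

definition bb :: "nat \<Rightarrow> real \<Rightarrow> nat \<Rightarrow> nat \<Rightarrow> real" where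
  "bb n \<delta> k l = inverse (\<Prod>j=1..l. - rr n \<delta> j (k - j))"

definition Iset :: "nat \<Rightarrow> nat \<Rightarrow> real set" where
  "Iset n k = {- real p / (2 * (real n + 1)) | p. p \<in> {k - 1 .. 2 * k - 2}}"

text \<open>s_op d k = s_(k-1) : R^(k-1) -> R^k.\<close>
definition s_op :: "real \<Rightarrow> nat \<Rightarrow> 'n::finite sym \<Rightarrow> 'n sym" where
  "s_op \<delta> k S = (\<lambda>x xi. - (\<Sum>l=1..k. bb CARD('n) \<delta> k l * Xpow \<delta> (k - l) l ((ia ^^ (l - 1)) S) x xi))"

end

theory Submission
  imports Defs
begin

declare split_paired_All[simp del] split_paired_Ex[simp del]
lemma qc_inner: "qc x i = x \<bullet> eq i" by (simp add: qc_def eq_def inner_prod_def inner_axis)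
lemma pc_inner: "pc x i = x \<bullet> ep i" by (simp add: pc_def ep_def inner_prod_def inner_axis)
lemma tc_inner: "tc x = x \<bullet> et" by (simp add: tc_def et_def inner_prod_def)
lemma eq_Basis: "eq i \<in> Basis" unfolding eq_def Basis_prod_def by (intro UnI1 image_eqI[where x="axis i 1"]) (auto simp: zero_prod_def)
lemma ep_Basis: "ep i \<in> Basis" unfolding ep_def Basis_prod_def by (intro UnI2 image_eqI[where x="(axis i 1, 0)"] UnI1) (auto simp: zero_prod_def)
lemma et_Basis: "et \<in> Basis" unfolding et_def Basis_prod_def by (intro UnI2 image_eqI[where x="(0, 1)"]) (auto simp: zero_prod_def Basis_prod_def)
lemma inner_basis_simps[simp]:
  "eq i \<bullet> eq j = (if i = j then 1 else 0)" "ep i \<bullet> ep j = (if i = j then 1 else 0)"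
  "eq i \<bullet> ep j = 0" "ep i \<bullet> eq j = 0" "eq i \<bullet> et = 0" "et \<bullet> eq i = 0"
  "ep i \<bullet> et = 0" "et \<bullet> ep i = 0" "et \<bullet> et = 1"
  by (auto simp: eq_def ep_def et_def inner_prod_def inner_axis_axis)
lemma inner_expand: "(xi::'n::finite pt) \<bullet> e = (\<Sum>i\<in>UNIV. (xi \<bullet> eq i) * (e \<bullet> eq i) + (xi \<bullet> ep i) * (e \<bullet> ep i)) + (xi \<bullet> et) * (e \<bullet> et)"
  by (simp add: sum.distrib flip: qc_inner pc_inner tc_inner)
     (simp add: qc_def pc_def tc_def inner_prod_def inner_vec_def)

definition DXi :: "'b::real_normed_vector \<Rightarrow> ('a \<Rightarrow> 'b \<Rightarrow> real) \<Rightarrow> ('a \<Rightarrow> 'b \<Rightarrow> real) \<Rightarrow> bool" where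
  "DXi v U U' \<longleftrightarrow> (\<forall>x xi. ((\<lambda>h. U x (xi + h *\<^sub>R v)) has_real_derivative U' x xi) (at 0))"
definition DX :: "'a::real_normed_vector \<Rightarrow> ('a \<Rightarrow> 'b \<Rightarrow> real) \<Rightarrow> ('a \<Rightarrow> 'b \<Rightarrow> real) \<Rightarrow> bool" where
  "DX v U U' \<longleftrightarrow> (\<forall>x xi. ((\<lambda>h. U (x + h *\<^sub>R v) xi) has_real_derivative U' x xi) (at 0))"

lemma DXi_eq: "DXi v U U' \<Longrightarrow> dXi v U = U'"
  unfolding DXi_def dXi_def by (rule ext, rule ext, rule DERIV_imp_deriv) blast
lemma DX_eq: "DX v U U' \<Longrightarrow> dX v U = U'"
  unfolding DX_def dX_def by (rule ext, rule ext, rule DERIV_imp_deriv) blast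
lemma DXi_eqI: "DXi v U U' \<Longrightarrow> (\<And>x xi. U' x xi = G x xi) \<Longrightarrow> dXi v U = G"
  by (drule DXi_eq) (simp add: fun_eq_iff)
lemma DX_eqI: "DX v U U' \<Longrightarrow> (\<And>x xi. U' x xi = G x xi) \<Longrightarrow> dX v U = G"
  by (drule DX_eq) (simp add: fun_eq_iff)

lemma DXi_add: "DXi v U U' \<Longrightarrow> DXi v V V' \<Longrightarrow> DXi v (\<lambda>x xi. U x xi + V x xi) (\<lambda>x xi. U' x xi + V' x xi)"
  unfolding DXi_def by (intro allI DERIV_add) auto
lemma DXi_diff: "DXi v U U' \<Longrightarrow> DXi v V V' \<Longrightarrow> DXi v (\<lambda>x xi. U x xi - V x xi) (\<lambda>x xi. U' x xi - V' x xi)"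
  unfolding DXi_def by (intro allI DERIV_diff) auto
lemma DXi_mult: "DXi v U U' \<Longrightarrow> DXi v V V' \<Longrightarrow> DXi v (\<lambda>x xi. U x xi * V x xi) (\<lambda>x xi. U' x xi * V x xi + U x xi * V' x xi)"
  unfolding DXi_def
proof (intro allI)
  fix x xi assume a: "\<forall>x xi. ((\<lambda>h. U x (xi + h *\<^sub>R v)) has_real_derivative U' x xi) (at 0)"
    and b: "\<forall>x xi. ((\<lambda>h. V x (xi + h *\<^sub>R v)) has_real_derivative V' x xi) (at 0)"
  show "((\<lambda>h. U x (xi + h *\<^sub>R v) * V x (xi + h *\<^sub>R v)) has_real_derivative U' x xi * V x xi + U x xi * V' x xi) (at 0)"
    using DERIV_mult'[OF a[rule_format, of x xi] b[rule_format, of x xi]] by (simp add: ac_simps)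
qed
lemma DXi_cmul: "DXi v U U' \<Longrightarrow> DXi v (\<lambda>x xi. c * U x xi) (\<lambda>x xi. c * U' x xi)"
  unfolding DXi_def by (intro allI DERIV_cmult) auto
lemma DXi_sum: "(\<And>i. i \<in> I \<Longrightarrow> DXi v (U i) (U' i)) \<Longrightarrow> DXi v (\<lambda>x xi. \<Sum>i\<in>I. U i x xi) (\<lambda>x xi. \<Sum>i\<in>I. U' i x xi)"
  unfolding DXi_def by (intro allI DERIV_sum) auto
lemma DXi_xonly: "DXi v (\<lambda>x xi. f x) (\<lambda>x xi. 0)"
  unfolding DXi_def by auto
lemma DXi_inner: "DXi v (\<lambda>x xi. xi \<bullet> e) (\<lambda>x xi. v \<bullet> e)"
  proof -
  have "((\<lambda>h. xi \<bullet> e + h * (v \<bullet> e)) has_real_derivative v \<bullet> e) (at 0)" for xi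
    by (auto intro!: derivative_eq_intros)
  then show ?thesis unfolding DXi_def by (simp add: inner_add_left)
qed

lemma DX_add: "DX v U U' \<Longrightarrow> DX v V V' \<Longrightarrow> DX v (\<lambda>x xi. U x xi + V x xi) (\<lambda>x xi. U' x xi + V' x xi)"
  unfolding DX_def by (intro allI DERIV_add) auto
lemma DX_diff: "DX v U U' \<Longrightarrow> DX v V V' \<Longrightarrow> DX v (\<lambda>x xi. U x xi - V x xi) (\<lambda>x xi. U' x xi - V' x xi)"
  unfolding DX_def by (intro allI DERIV_diff) auto
lemma DX_mult: "DX v U U' \<Longrightarrow> DX v V V' \<Longrightarrow> DX v (\<lambda>x xi. U x xi * V x xi) (\<lambda>x xi. U' x xi * V x xi + U x xi * V' x xi)"
  unfolding DX_def
proof (intro allI)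
  fix x xi assume a: "\<forall>x xi. ((\<lambda>h. U (x + h *\<^sub>R v) xi) has_real_derivative U' x xi) (at 0)"
    and b: "\<forall>x xi. ((\<lambda>h. V (x + h *\<^sub>R v) xi) has_real_derivative V' x xi) (at 0)"
  show "((\<lambda>h. U (x + h *\<^sub>R v) xi * V (x + h *\<^sub>R v) xi) has_real_derivative U' x xi * V x xi + U x xi * V' x xi) (at 0)"
    using DERIV_mult'[OF a[rule_format, of x xi] b[rule_format, of x xi]] by (simp add: ac_simps)
qed
lemma DX_cmul: "DX v U U' \<Longrightarrow> DX v (\<lambda>x xi. c * U x xi) (\<lambda>x xi. c * U' x xi)"
  unfolding DX_def by (intro allI DERIV_cmult) auto
lemma DX_sum: "(\<And>i. i \<in> I \<Longrightarrow> DX v (U i) (U' i)) \<Longrightarrow> DX v (\<lambda>x xi. \<Sum>i\<in>I. U i x xi) (\<lambda>x xi. \<Sum>i\<in>I. U' i x xi)"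
  unfolding DX_def by (intro allI DERIV_sum) auto
lemma DX_xionly: "DX v (\<lambda>x xi. f xi) (\<lambda>x xi. 0)"
  unfolding DX_def by auto
lemma DX_inner: "DX v (\<lambda>x xi. x \<bullet> e) (\<lambda>x xi. v \<bullet> e)"
  proof -
  have "((\<lambda>h. x \<bullet> e + h * (v \<bullet> e)) has_real_derivative v \<bullet> e) (at 0)" for x
    by (auto intro!: derivative_eq_intros)
  then show ?thesis unfolding DX_def by (simp add: inner_add_left)
qed

definition gdX :: "'a::real_normed_vector \<Rightarrow> ('a \<Rightarrow> 'b \<Rightarrow> real) \<Rightarrow> ('a \<Rightarrow> 'b \<Rightarrow> real)" where
  "gdX v S = (\<lambda>x xi. deriv (\<lambda>h. S (x + h *\<^sub>R v) xi) 0)"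
definition gdXi :: "'b::real_normed_vector \<Rightarrow> ('a \<Rightarrow> 'b \<Rightarrow> real) \<Rightarrow> ('a \<Rightarrow> 'b \<Rightarrow> real)" where
  "gdXi v S = (\<lambda>x xi. deriv (\<lambda>h. S x (xi + h *\<^sub>R v)) 0)"
lemma dX_gdX: "dX = gdX" by (intro ext) (simp add: dX_def gdX_def)
lemma dXi_gdXi: "dXi = gdXi" by (intro ext) (simp add: dXi_def gdXi_def)

lemma gDXi_eq: "DXi v U U' \<Longrightarrow> gdXi v U = U'"
  unfolding DXi_def gdXi_def by (rule ext, rule ext, rule DERIV_imp_deriv) blast
lemma gDX_eq: "DX v U U' \<Longrightarrow> gdX v U = U'"
  unfolding DX_def gdX_def by (rule ext, rule ext, rule DERIV_imp_deriv) blast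

definition dX1 :: "'a::real_normed_vector \<Rightarrow> ('a \<Rightarrow> real) \<Rightarrow> 'a \<Rightarrow> real" where
  "dX1 b c = (\<lambda>x. deriv (\<lambda>h. c (x + h *\<^sub>R b)) 0)"

coinductive Sm :: "('a::euclidean_space \<Rightarrow> real) \<Rightarrow> bool" where
  "(\<forall>b\<in>Basis. (\<forall>x. ((\<lambda>h. c (x + h *\<^sub>R b)) has_real_derivative dX1 b c x) (at 0)) \<and> Sm (dX1 b c)) \<Longrightarrow> Sm c"

lemma Sm_D: "Sm c \<Longrightarrow> b \<in> Basis \<Longrightarrow> ((\<lambda>h. c (x + h *\<^sub>R b)) has_real_derivative dX1 b c x) (at 0)"
  by (erule Sm.cases) blast
lemma Sm_dX1: "Sm c \<Longrightarrow> b \<in> Basis \<Longrightarrow> Sm (dX1 b c)"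
  by (erule Sm.cases) blast

lemma Sm_const: "Sm (\<lambda>x. a)"
proof -
  have "\<exists>a. c = (\<lambda>x. a) \<Longrightarrow> Sm c" for c :: "'a \<Rightarrow> real"
  proof (coinduction arbitrary: c rule: Sm.coinduct)
    case (Sm c)
    then obtain a where c: "c = (\<lambda>x. a)" by blast
    have d: "dX1 b (\<lambda>x. a) = (\<lambda>x. 0)" for b unfolding dX1_def by simp
    show ?case by (auto simp: c d)
  qed
  then show ?thesis by blast
qed

lemma Sm_iter:
  fixes F :: "('a::euclidean_space \<times> 'b::euclidean_space) \<Rightarrow> real"
  assumes sm: "smooth F" and vs0: "set vs0 \<subseteq> Basis"
  shows "Sm (\<lambda>x. iter_pd vs0 F (x, y))"
proof (rule Sm.coinduct[where X="\<lambda>c. \<exists>vs. set vs \<subseteq> Basis \<and> c = (\<lambda>x. iter_pd vs F (x, y))"])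
  show "\<exists>vs. set vs \<subseteq> Basis \<and> (\<lambda>x. iter_pd vs0 F (x, y)) = (\<lambda>x. iter_pd vs F (x, y))"
    using vs0 by blast
next
  fix c :: "'a \<Rightarrow> real"
  assume "\<exists>vs. set vs \<subseteq> Basis \<and> c = (\<lambda>x. iter_pd vs F (x, y))"
  then obtain vs where vs: "set vs \<subseteq> Basis" and c: "c = (\<lambda>x. iter_pd vs F (x, y))" by blast
  show "\<exists>c'. c = c' \<and> (\<forall>b\<in>Basis. (\<forall>x. ((\<lambda>h. c' (x + h *\<^sub>R b)) has_real_derivative dX1 b c' x) (at 0)) \<and>
     ((\<exists>vs. set vs \<subseteq> Basis \<and> dX1 b c' = (\<lambda>x. iter_pd vs F (x, y))) \<or> Sm (dX1 b c')))"
  proof (intro exI[of _ c] conjI[OF refl] ballI)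
    fix b :: 'a assume b: "b \<in> Basis"
    have bB: "(b, 0) \<in> (Basis :: ('a \<times> 'b) set)" using b by (auto simp: Basis_prod_def)
    have eq: "(x, y) + h *\<^sub>R (b, 0) = (x + h *\<^sub>R b, y)" for x h by simp
    have dif: "(\<lambda>h. c (x + h *\<^sub>R b)) differentiable (at 0)" for x
    proof -
      have "\<forall>b\<in>Basis. \<forall>z. (\<lambda>h. iter_pd vs F (z + h *\<^sub>R b)) differentiable (at 0)"
        using sm vs unfolding smooth_def by simp
      then have "\<forall>z. (\<lambda>h. iter_pd vs F (z + h *\<^sub>R (b,0))) differentiable (at 0)"
        using bB by blast
      then have "(\<lambda>h. iter_pd vs F ((x,y) + h *\<^sub>R (b,0))) differentiable (at 0)"
        by (rule spec)
      then show ?thesis by (simp add: c eq)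
    qed
    have dd: "dX1 b c = (\<lambda>x. iter_pd ((b,0) # vs) F (x, y))"
      unfolding dX1_def c by (simp add: eq)
    have A: "\<forall>x. ((\<lambda>h. c (x + h *\<^sub>R b)) has_real_derivative dX1 b c x) (at 0)"
      using dif by (simp add: dX1_def DERIV_deriv_iff_real_differentiable)
    have "set ((b,0) # vs) \<subseteq> Basis" using vs bB by simp
    then have E: "\<exists>vs. set vs \<subseteq> Basis \<and> dX1 b c = (\<lambda>x. iter_pd vs F (x, y))"
      using dd by (intro exI[where x="(b,0::'b) # vs"] conjI)
    show "(\<forall>x. ((\<lambda>h. c (x + h *\<^sub>R b)) has_real_derivative dX1 b c x) (at 0)) \<and>
     ((\<exists>vs. set vs \<subseteq> Basis \<and> dX1 b c = (\<lambda>x. iter_pd vs F (x, y))) \<or> Sm (dX1 b c))"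
      using A E by (intro conjI disjI1)
  qed
qed



lemma DX_cong: "DX v U U' \<Longrightarrow> (\<And>x xi. U' x xi = U'' x xi) \<Longrightarrow> DX v U U''"
  unfolding DX_def by simp
lemma DXi_cong: "DXi v U U' \<Longrightarrow> (\<And>x xi. U' x xi = U'' x xi) \<Longrightarrow> DXi v U U''"
  unfolding DXi_def by simp
lemma DX_Sm: "Sm c \<Longrightarrow> w \<in> Basis \<Longrightarrow> DX w (\<lambda>x xi. c x) (\<lambda>x xi. dX1 w c x)"
  unfolding DX_def by (blast intro: Sm_D)

inductive HP :: "nat \<Rightarrow> ('a::euclidean_space \<Rightarrow> 'b::euclidean_space \<Rightarrow> real) \<Rightarrow> bool" where
  HP_zero: "HP m (\<lambda>x xi. 0)"
| HP_const: "Sm c \<Longrightarrow> HP 0 (\<lambda>x xi. c x)"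
| HP_xi: "HP m T \<Longrightarrow> HP (Suc m) (\<lambda>x xi. (xi \<bullet> e) * T x xi)"
| HP_x: "HP m T \<Longrightarrow> HP m (\<lambda>x xi. (x \<bullet> e) * T x xi)"
| HP_add: "HP m T \<Longrightarrow> HP m U \<Longrightarrow> HP m (\<lambda>x xi. T x xi + U x xi)"
| HP_cmul: "HP m T \<Longrightarrow> HP m (\<lambda>x xi. a * T x xi)"

lemma HP_eq: "HP m T \<Longrightarrow> (\<And>x xi. T x xi = U x xi) \<Longrightarrow> HP m U"
proof -
  assume "HP m T" "\<And>x xi. T x xi = U x xi"
  moreover have "T = U" using calculation(2) by (intro ext) simp
  ultimately show ?thesis by simp
qed

lemma HP_dX: "HP m T \<Longrightarrow> w \<in> Basis \<Longrightarrow> DX w T (gdX w T) \<and> HP m (gdX w T)"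
proof (induction rule: HP.induct)
  case (HP_zero m)
  have D: "DX w (\<lambda>(x::'a) (xi::'b). 0::real) (\<lambda>x xi. 0)" by (rule DX_xionly)
  show ?case using gDX_eq[OF D] D by (simp add: HP.HP_zero)
next
  case (HP_const c)
  have D: "DX w (\<lambda>x xi. c x) (\<lambda>x xi. dX1 w c x)" by (rule DX_Sm[OF HP_const.hyps HP_const.prems])
  show ?case unfolding gDX_eq[OF D] using D HP.HP_const[OF Sm_dX1[OF HP_const.hyps HP_const.prems]] by (rule conjI)
next
  case (HP_xi m T e)
  have D: "DX w (\<lambda>x xi. (xi \<bullet> e) * T x xi) (\<lambda>x xi. (xi \<bullet> e) * gdX w T x xi)"
    by (rule DX_cong[OF DX_mult[OF DX_xionly conjunct1[OF HP_xi.IH[OF HP_xi.prems]]]]) simp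
  show ?case using gDX_eq[OF D] D HP.HP_xi[OF conjunct2[OF HP_xi.IH[OF HP_xi.prems]]] by simp
next
  case (HP_x m T e)
  have D: "DX w (\<lambda>x xi. (x \<bullet> e) * T x xi) (\<lambda>x xi. (w \<bullet> e) * T x xi + (x \<bullet> e) * gdX w T x xi)"
    by (rule DX_mult[OF DX_inner conjunct1[OF HP_x.IH[OF HP_x.prems]]])
  show ?case using gDX_eq[OF D] D
      HP.HP_add[OF HP.HP_cmul[OF HP_x.hyps] HP.HP_x[OF conjunct2[OF HP_x.IH[OF HP_x.prems]]]] by simp
next
  case (HP_add m T U)
  have D: "DX w (\<lambda>x xi. T x xi + U x xi) (\<lambda>x xi. gdX w T x xi + gdX w U x xi)"
    by (rule DX_add[OF conjunct1[OF HP_add.IH(1)[OF HP_add.prems]] conjunct1[OF HP_add.IH(2)[OF HP_add.prems]]])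
  show ?case using gDX_eq[OF D] D
      HP.HP_add[OF conjunct2[OF HP_add.IH(1)[OF HP_add.prems]] conjunct2[OF HP_add.IH(2)[OF HP_add.prems]]] by simp
next
  case (HP_cmul m T a)
  have D: "DX w (\<lambda>x xi. a * T x xi) (\<lambda>x xi. a * gdX w T x xi)"
    by (rule DX_cmul[OF conjunct1[OF HP_cmul.IH[OF HP_cmul.prems]]])
  show ?case using gDX_eq[OF D] D HP.HP_cmul[OF conjunct2[OF HP_cmul.IH[OF HP_cmul.prems]]] by simp
qed

lemma HP_dXi: "HP m T \<Longrightarrow> DXi v T (gdXi v T) \<and> HP (m - 1) (gdXi v T) \<and> (m = 0 \<longrightarrow> gdXi v T = (\<lambda>x xi. 0))"
proof (induction rule: HP.induct)
  case (HP_zero m)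
  have D: "DXi v (\<lambda>(x::'a) (xi::'b). 0::real) (\<lambda>x xi. 0)" by (rule DXi_xonly)
  show ?case using gDXi_eq[OF D] D by (simp add: HP.HP_zero)
next
  case (HP_const c)
  have D: "DXi v (\<lambda>x xi. c x) (\<lambda>x xi. 0)" by (rule DXi_xonly)
  show ?case using gDXi_eq[OF D] D by (simp add: HP.HP_zero)
next
  case (HP_xi m T e)
  have D: "DXi v (\<lambda>x xi. (xi \<bullet> e) * T x xi) (\<lambda>x xi. (v \<bullet> e) * T x xi + (xi \<bullet> e) * gdXi v T x xi)"
    by (rule DXi_mult[OF DXi_inner conjunct1[OF HP_xi.IH]])
  have H: "HP m (\<lambda>x xi. (xi \<bullet> e) * gdXi v T x xi)"
  proof (cases m)
    case 0
    then show ?thesis using HP_xi.IH by (simp add: HP.HP_zero)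
  next
    case (Suc k)
    then show ?thesis using HP.HP_xi[of k "gdXi v T" e] HP_xi.IH by simp
  qed
  show ?case using gDXi_eq[OF D] D HP.HP_add[OF HP.HP_cmul[OF HP_xi.hyps] H] by simp
next
  case (HP_x m T e)
  have D: "DXi v (\<lambda>x xi. (x \<bullet> e) * T x xi) (\<lambda>x xi. (x \<bullet> e) * gdXi v T x xi)"
    by (rule DXi_cong[OF DXi_mult[OF DXi_xonly conjunct1[OF HP_x.IH]]]) simp
  show ?case using gDXi_eq[OF D] D HP.HP_x[OF conjunct1[OF conjunct2[OF HP_x.IH]]] HP_x.IH by auto
next
  case (HP_add m T U)
  have D: "DXi v (\<lambda>x xi. T x xi + U x xi) (\<lambda>x xi. gdXi v T x xi + gdXi v U x xi)"
    by (rule DXi_add[OF conjunct1[OF HP_add.IH(1)] conjunct1[OF HP_add.IH(2)]])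
  show ?case using gDXi_eq[OF D] D HP_add.IH
      HP.HP_add[OF conjunct1[OF conjunct2[OF HP_add.IH(1)]] conjunct1[OF conjunct2[OF HP_add.IH(2)]]] by auto
next
  case (HP_cmul m T a)
  have D: "DXi v (\<lambda>x xi. a * T x xi) (\<lambda>x xi. a * gdXi v T x xi)"
    by (rule DXi_cmul[OF conjunct1[OF HP_cmul.IH]])
  show ?case using gDXi_eq[OF D] D HP_cmul.IH HP.HP_cmul[OF conjunct1[OF conjunct2[OF HP_cmul.IH]]] by auto
qed



inductive hp :: "('a::euclidean_space \<Rightarrow> 'b::euclidean_space \<Rightarrow> real) \<Rightarrow> bool" where
  hp_HP: "HP m T \<Longrightarrow> hp T"
| hp_add[simp]: "hp T \<Longrightarrow> hp U \<Longrightarrow> hp (\<lambda>x xi. T x xi + U x xi)"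

lemma hp_eq: "hp T \<Longrightarrow> (\<And>x xi. T x xi = U x xi) \<Longrightarrow> hp U"
proof -
  assume "hp T" "\<And>x xi. T x xi = U x xi"
  moreover have "T = U" using calculation(2) by (intro ext) simp
  ultimately show ?thesis by simp
qed

lemma hp_zero[simp]: "hp (\<lambda>x xi. 0)" by (rule hp_HP[OF HP_zero])
lemma hp_xi[simp]: "hp T \<Longrightarrow> hp (\<lambda>x xi. (xi \<bullet> e) * T x xi)"
proof (induction rule: hp.induct)
  case (hp_HP m T) then show ?case by (blast intro: hp.hp_HP HP_xi)
next
  case (hp_add T U) show ?case by (rule hp_eq[OF hp.hp_add[OF hp_add.IH]]) (simp add: algebra_simps)
qed
lemma hp_x[simp]: "hp T \<Longrightarrow> hp (\<lambda>x xi. (x \<bullet> e) * T x xi)"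
proof (induction rule: hp.induct)
  case (hp_HP m T) then show ?case by (blast intro: hp.hp_HP HP_x)
next
  case (hp_add T U) show ?case by (rule hp_eq[OF hp.hp_add[OF hp_add.IH]]) (simp add: algebra_simps)
qed
lemma hp_cmul[simp]: "hp T \<Longrightarrow> hp (\<lambda>x xi. a * T x xi)"
proof (induction rule: hp.induct)
  case (hp_HP m T) then show ?case by (blast intro: hp.hp_HP HP_cmul)
next
  case (hp_add T U) show ?case by (rule hp_eq[OF hp.hp_add[OF hp_add.IH]]) (simp add: algebra_simps)
qed

lemma HP_diff: "HP m T \<Longrightarrow> HP m U \<Longrightarrow> HP m (\<lambda>x xi. T x xi - U x xi)"
  by (rule HP_eq[OF HP_add[OF _ HP_cmul[where a="-1"]]]) auto
lemma HP_sum: "finite I \<Longrightarrow> (\<And>i. i \<in> I \<Longrightarrow> HP m (T i)) \<Longrightarrow> HP m (\<lambda>x xi. \<Sum>i\<in>I. T i x xi)"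
proof (induction rule: finite_induct)
  case empty then show ?case by (simp add: HP_zero)
next
  case (insert a F)
  then show ?case by (auto intro!: HP_add)
qed
lemma HP_neg: "HP m T \<Longrightarrow> HP m (\<lambda>x xi. - T x xi)"
  by (rule HP_eq[OF HP_cmul[where a="-1"]]) auto

lemma hp_DX_both: "hp T \<Longrightarrow> w \<in> Basis \<Longrightarrow> DX w T (gdX w T) \<and> hp (gdX w T)"
proof (induction rule: hp.induct)
  case (hp_HP m T) then show ?case using HP_dX hp.hp_HP by blast
next
  case (hp_add T U)
  have D: "DX w (\<lambda>x xi. T x xi + U x xi) (\<lambda>x xi. gdX w T x xi + gdX w U x xi)"
    using hp_add by (intro DX_add) auto
  show ?case unfolding gDX_eq[OF D] using D hp_add by auto
qed
lemma hp_DXi_both: "hp T \<Longrightarrow> DXi v T (gdXi v T) \<and> hp (gdXi v T)"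
proof (induction rule: hp.induct)
  case (hp_HP m T) then show ?case using HP_dXi hp.hp_HP by blast
next
  case (hp_add T U)
  have D: "DXi v (\<lambda>x xi. T x xi + U x xi) (\<lambda>x xi. gdXi v T x xi + gdXi v U x xi)"
    using hp_add by (intro DXi_add) auto
  show ?case unfolding gDXi_eq[OF D] using D hp_add by auto
qed
lemma hp_dX[simp]: "hp T \<Longrightarrow> w \<in> Basis \<Longrightarrow> hp (gdX w T)" using hp_DX_both by blast
lemma hp_dXi[simp]: "hp T \<Longrightarrow> hp (gdXi v T)" using hp_DXi_both by blast
lemma hp_DX: "hp T \<Longrightarrow> w \<in> Basis \<Longrightarrow> DX w T (gdX w T)" using hp_DX_both by blast
lemma hp_DXi: "hp T \<Longrightarrow> DXi v T (gdXi v T)" using hp_DXi_both by blast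

lemma gdX_zero[simp]: "gdX w (\<lambda>x xi. 0) = (\<lambda>x xi. 0)"
  by (rule gDX_eq[OF DX_xionly])
lemma gdXi_zero[simp]: "gdXi v (\<lambda>x xi. 0) = (\<lambda>x xi. 0)"
  by (rule gDXi_eq[OF DXi_xonly])
lemma gdXi_xonly[simp]: "gdXi v (\<lambda>x xi. f x) = (\<lambda>x xi. 0)"
  by (rule gDXi_eq[OF DXi_xonly])
lemma gdX_xionly[simp]: "gdX w (\<lambda>x xi. f xi) = (\<lambda>x xi. 0)"
  by (rule gDX_eq[OF DX_xionly])
lemma gdX_const: "Sm c \<Longrightarrow> w \<in> Basis \<Longrightarrow> gdX w (\<lambda>x xi. c x) = (\<lambda>x xi. dX1 w c x)"
  by (rule gDX_eq[OF DX_Sm])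
lemma gdX_xi[simp]: "hp T \<Longrightarrow> w \<in> Basis \<Longrightarrow> gdX w (\<lambda>x xi. (xi \<bullet> e) * T x xi) = (\<lambda>x xi. (xi \<bullet> e) * gdX w T x xi)"
  by (rule gDX_eq, rule DX_cong[OF DX_mult[OF DX_xionly hp_DX]]) auto
lemma gdXi_xi[simp]: "hp T \<Longrightarrow> gdXi v (\<lambda>x xi. (xi \<bullet> e) * T x xi) = (\<lambda>x xi. (v \<bullet> e) * T x xi + (xi \<bullet> e) * gdXi v T x xi)"
  by (rule gDXi_eq, rule DXi_mult[OF DXi_inner hp_DXi])
lemma gdX_x[simp]: "hp T \<Longrightarrow> w \<in> Basis \<Longrightarrow> gdX w (\<lambda>x xi. (x \<bullet> e) * T x xi) = (\<lambda>x xi. (w \<bullet> e) * T x xi + (x \<bullet> e) * gdX w T x xi)"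
  by (rule gDX_eq, rule DX_mult[OF DX_inner hp_DX])
lemma gdXi_x[simp]: "hp T \<Longrightarrow> gdXi v (\<lambda>x xi. (x \<bullet> e) * T x xi) = (\<lambda>x xi. (x \<bullet> e) * gdXi v T x xi)"
  by (rule gDXi_eq, rule DXi_cong[OF DXi_mult[OF DXi_xonly hp_DXi]]) auto
lemma gdX_add[simp]: "hp T \<Longrightarrow> hp U \<Longrightarrow> w \<in> Basis \<Longrightarrow> gdX w (\<lambda>x xi. T x xi + U x xi) = (\<lambda>x xi. gdX w T x xi + gdX w U x xi)"
  by (rule gDX_eq, rule DX_add[OF hp_DX hp_DX])
lemma gdXi_add[simp]: "hp T \<Longrightarrow> hp U \<Longrightarrow> gdXi v (\<lambda>x xi. T x xi + U x xi) = (\<lambda>x xi. gdXi v T x xi + gdXi v U x xi)"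
  by (rule gDXi_eq, rule DXi_add[OF hp_DXi hp_DXi])
lemma gdX_cmul[simp]: "hp T \<Longrightarrow> w \<in> Basis \<Longrightarrow> gdX w (\<lambda>x xi. a * T x xi) = (\<lambda>x xi. a * gdX w T x xi)"
  by (rule gDX_eq, rule DX_cmul[OF hp_DX])
lemma gdXi_cmul[simp]: "hp T \<Longrightarrow> gdXi v (\<lambda>x xi. a * T x xi) = (\<lambda>x xi. a * gdXi v T x xi)"
  by (rule gDXi_eq, rule DXi_cmul[OF hp_DXi])

lemma HP_hp[simp]: "HP m T \<Longrightarrow> hp T" by (rule hp_HP)
lemma hp_diff[simp]: "hp T \<Longrightarrow> hp U \<Longrightarrow> hp (\<lambda>x xi. T x xi - U x xi)"
  by (rule hp_eq[OF hp_add[OF _ hp_cmul[where a="-1"]]]) auto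
lemma hp_sum[simp]: "(\<And>i. i \<in> I \<Longrightarrow> hp (T i)) \<Longrightarrow> hp (\<lambda>x xi. \<Sum>i\<in>I. T i x xi)"
proof (cases "finite I")
  case True
  assume "\<And>i. i \<in> I \<Longrightarrow> hp (T i)"
  with True show ?thesis
  proof (induction rule: finite_induct)
    case empty then show ?case by simp
  next
    case (insert a F) then show ?case by simp
  qed
qed simp
lemma hp_neg[simp]: "hp T \<Longrightarrow> hp (\<lambda>x xi. - T x xi)"
  by (rule hp_eq[OF hp_cmul[where a="-1"]]) auto
lemma hp_mult_xi[simp]: "hp T \<Longrightarrow> hp (\<lambda>x xi. T x xi * (xi \<bullet> e))"
  by (rule hp_eq[OF hp_xi]) (auto simp: mult.commute)

lemma gdX_sum[simp]: "(\<And>i. i \<in> I \<Longrightarrow> hp (T i)) \<Longrightarrow> w \<in> Basis \<Longrightarrow> gdX w (\<lambda>x xi. \<Sum>i\<in>I. T i x xi) = (\<lambda>x xi. \<Sum>i\<in>I. gdX w (T i) x xi)"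
  by (rule gDX_eq, rule DX_sum, rule hp_DX) auto
lemma gdXi_sum[simp]: "(\<And>i. i \<in> I \<Longrightarrow> hp (T i)) \<Longrightarrow> gdXi v (\<lambda>x xi. \<Sum>i\<in>I. T i x xi) = (\<lambda>x xi. \<Sum>i\<in>I. gdXi v (T i) x xi)"
  by (rule gDXi_eq, rule DXi_sum, rule hp_DXi) auto
lemma gdX_diff[simp]: "hp T \<Longrightarrow> hp U \<Longrightarrow> w \<in> Basis \<Longrightarrow> gdX w (\<lambda>x xi. T x xi - U x xi) = (\<lambda>x xi. gdX w T x xi - gdX w U x xi)"
  by (rule gDX_eq, rule DX_diff[OF hp_DX hp_DX])
lemma gdXi_diff[simp]: "hp T \<Longrightarrow> hp U \<Longrightarrow> gdXi v (\<lambda>x xi. T x xi - U x xi) = (\<lambda>x xi. gdXi v T x xi - gdXi v U x xi)"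
  by (rule gDXi_eq, rule DXi_diff[OF hp_DXi hp_DXi])

lemma comm_HP: "HP m T \<Longrightarrow> w \<in> Basis \<Longrightarrow> gdXi v (gdX w T) = gdX w (gdXi v T)"
proof (induction rule: HP.induct)
  case (HP_const c)
  then show ?case by (simp add: gdX_const)
next
  case (HP_xi m T e)
  then show ?case using HP_hp[OF HP_xi.hyps] by simp
next
  case (HP_x m T e)
  then show ?case using HP_hp[OF HP_x.hyps] by simp
next
  case (HP_add m T U)
  then show ?case using HP_hp[OF HP_add.hyps(1)] HP_hp[OF HP_add.hyps(2)] by simp
next
  case (HP_cmul m T a)
  then show ?case using HP_hp[OF HP_cmul.hyps] by simp
qed simp

lemma comm: "hp T \<Longrightarrow> w \<in> Basis \<Longrightarrow> gdXi v (gdX w T) = gdX w (gdXi v T)"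
proof (induction rule: hp.induct)
  case (hp_HP m T) then show ?case by (rule comm_HP)
next
  case (hp_add T U) then show ?case by simp
qed



definition L1lin :: "'n::finite pt \<Rightarrow> ('n pt \<Rightarrow> real) \<Rightarrow> real" where
  "L1lin x f = (\<Sum>i\<in>UNIV. (x \<bullet> ep i) * f (eq i) - (x \<bullet> eq i) * f (ep i))"
definition L1 :: "'n::finite pt \<Rightarrow> ('n pt \<Rightarrow> real) \<Rightarrow> real" where
  "L1 x f = L1lin x f - f et"
definition Esx :: "'n::finite pt \<Rightarrow> ('n pt \<Rightarrow> real) \<Rightarrow> real" where
  "Esx x g = (\<Sum>j\<in>UNIV. (x \<bullet> ep j) * g (ep j) + (x \<bullet> eq j) * g (eq j))"
definition Exi :: "'n::finite pt \<Rightarrow> 'n pt \<Rightarrow> real" where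
  "Exi x xi = (\<Sum>j\<in>UNIV. (x \<bullet> ep j) * (xi \<bullet> ep j) + (x \<bullet> eq j) * (xi \<bullet> eq j))"
definition L2 :: "'n::finite pt \<Rightarrow> 'n pt \<Rightarrow> ('n pt \<Rightarrow> real) \<Rightarrow> real" where
  "L2 x xi g = (\<Sum>j\<in>UNIV. (xi \<bullet> eq j) * g (ep j) - (xi \<bullet> ep j) * g (eq j)) + (xi \<bullet> et) * Esx x g - Exi x xi * g et"
definition Eul :: "'n::finite pt \<Rightarrow> ('n pt \<Rightarrow> real) \<Rightarrow> real" where
  "Eul xi b = (\<Sum>j\<in>UNIV. (xi \<bullet> eq j) * b (eq j) + (xi \<bullet> ep j) * b (ep j)) + (xi \<bullet> et) * b et"

lemma if0_simps:
  "(a::real) * (if P then b else 0) = (if P then a * b else 0)"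
  "(if P then b else 0) * (a::real) = (if P then b * a else 0)"
  "- (if P then (b::real) else 0) = (if P then - b else 0)"
  by auto

lemma L2_add: "L2 x xi (\<lambda>w. f w + g w) = L2 x xi f + L2 x xi g"
  unfolding L2_def Esx_def by (simp add: sum.distrib algebra_simps sum_subtractf)
lemma L2_diff: "L2 x xi (\<lambda>w. f w - g w) = L2 x xi f - L2 x xi g"
  unfolding L2_def Esx_def by (simp add: sum.distrib algebra_simps sum_subtractf)
lemma L2_cmul: "L2 x xi (\<lambda>w. a * f w) = a * L2 x xi f"
  unfolding L2_def Esx_def by (simp add: sum.distrib algebra_simps sum_subtractf sum_distrib_left)
lemma L2_sum: "L2 x xi (\<lambda>w. \<Sum>i\<in>I. f i w) = (\<Sum>i\<in>I. L2 x xi (f i))"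
  unfolding L2_def Esx_def
  by (simp add: sum.distrib algebra_simps sum_subtractf sum_distrib_left sum_distrib_right sum.swap[of _ I])

lemma L1_add: "L1 x (\<lambda>w. f w + g w) = L1 x f + L1 x g"
  unfolding L1_def L1lin_def by (simp add: sum.distrib algebra_simps sum_subtractf)
lemma L1_cmul: "L1 x (\<lambda>w. a * f w) = a * L1 x f"
  unfolding L1_def L1lin_def by (simp add: sum.distrib algebra_simps sum_subtractf sum_distrib_left)

lemma G1: "L1 x (\<lambda>v. L2 x xi (\<lambda>w. C v w)) = L2 x xi (\<lambda>w. L1 x (\<lambda>v. C v w))"
  unfolding L1_def L1lin_def by (simp add: L2_diff L2_sum L2_cmul)

lemma G2: "L1 x (\<lambda>v. L2 x v a) = 0"
  unfolding L1_def L1lin_def L2_def Exi_def Esx_def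
  by (simp add: algebra_simps sum.distrib sum_subtractf if0_simps)

lemma G3: "L2 x xi (\<lambda>w. L1lin w b) = Eul xi b + (xi \<bullet> et) * L1 x b"
  unfolding L1_def L1lin_def L2_def Exi_def Esx_def Eul_def
  by (simp add: algebra_simps sum.distrib sum_subtractf if0_simps sum_distrib_left)

lemma G4: "L1 x (\<lambda>v. (v \<bullet> et) * t + (xi \<bullet> et) * b v) = - t + (xi \<bullet> et) * L1 x b"
  unfolding L1_def L1lin_def
  by (simp add: algebra_simps sum.distrib sum_subtractf sum_distrib_left)



lemma ia_L1: "ia T = (\<lambda>x xi. (1/2) * L1 x (\<lambda>v. gdXi v T x xi))"
  unfolding ia_def L1_def L1lin_def dXi_gdXi pc_inner qc_inner by simp

lemma Dop_L2: "Dop T = (\<lambda>x xi. L2 x xi (\<lambda>w. gdX w T x xi))"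
  unfolding Dop_def L2_def Esx_def Exi_def Es_def Es_xi_def dX_gdX pc_inner qc_inner tc_inner by simp

lemma Xop_alt: "Xop \<delta> k T = (\<lambda>x xi. Dop T x xi + (2 * (real CARD('n) + 1) * \<delta> + real k) * ((xi \<bullet> et) * T x xi))"
  for T :: "'n::finite sym"
  unfolding Xop_def tc_inner by (simp add: algebra_simps)

lemma HP_ia: "HP m T \<Longrightarrow> HP (m - 1) (ia T)"
  for T :: "'n::finite sym"
proof -
  assume T: "HP m T"
  have d: "HP (m - 1) (gdXi v T)" for v using HP_dXi[OF T] by blast
  have "HP (m - 1) (\<lambda>x xi. (1/2) * ((\<Sum>i\<in>UNIV. (x \<bullet> ep i) * gdXi (eq i) T x xi - (x \<bullet> eq i) * gdXi (ep i) T x xi) - gdXi et T x xi))"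
    by (intro HP_cmul HP_diff HP_sum HP_x d) simp
  then show ?thesis unfolding ia_L1 L1_def L1lin_def .
qed

lemma HP_Dop: "HP m T \<Longrightarrow> HP (Suc m) (Dop T)"
  for T :: "'n::finite sym"
proof -
  assume T: "HP m T"
  have d: "HP m (gdX w T)" if "w \<in> Basis" for w using HP_dX[OF T that] by blast
  have "HP (Suc m) (\<lambda>x xi. (\<Sum>j\<in>UNIV. (xi \<bullet> eq j) * gdX (ep j) T x xi - (xi \<bullet> ep j) * gdX (eq j) T x xi)
      + (xi \<bullet> et) * (\<Sum>j\<in>UNIV. (x \<bullet> ep j) * gdX (ep j) T x xi + (x \<bullet> eq j) * gdX (eq j) T x xi)
      - (\<Sum>j\<in>UNIV. (x \<bullet> ep j) * ((xi \<bullet> ep j) * gdX et T x xi) + (x \<bullet> eq j) * ((xi \<bullet> eq j) * gdX et T x xi)))"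
    by (intro HP_add HP_diff HP_sum HP_xi HP_x d eq_Basis ep_Basis et_Basis) simp_all
  then show ?thesis unfolding Dop_L2 L2_def Esx_def Exi_def
    by (rule HP_eq) (simp add: sum_distrib_left algebra_simps)
qed

lemma HP_Xop: "HP m T \<Longrightarrow> HP (Suc m) (Xop \<delta> k T)"
  for T :: "'n::finite sym"
  unfolding Xop_alt by (intro HP_add HP_Dop HP_cmul HP_xi)

lemma Euler_HP: "HP m T \<Longrightarrow> Eul xi (\<lambda>v. gdXi v T x xi) = real m * T x xi"
  for T :: "'n::finite pt \<Rightarrow> 'n pt \<Rightarrow> real"
proof (induction arbitrary: x xi rule: HP.induct)
  case (HP_zero m) then show ?case by (simp add: Eul_def)
next
  case (HP_const c) then show ?case by (simp add: Eul_def)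
next
  case (HP_xi m T e)
  have h: "hp T" using HP_xi.hyps by simp
  have ie: "(\<Sum>j\<in>UNIV. (xi \<bullet> eq j) * (eq j \<bullet> e) + (xi \<bullet> ep j) * (ep j \<bullet> e)) + (xi \<bullet> et) * (et \<bullet> e) = xi \<bullet> e"
    using inner_expand[of xi e] by (simp add: inner_commute)
  have "Eul xi (\<lambda>v. gdXi v (\<lambda>x xi. (xi \<bullet> e) * T x xi) x xi)
      = ((\<Sum>j\<in>UNIV. (xi \<bullet> eq j) * (eq j \<bullet> e) + (xi \<bullet> ep j) * (ep j \<bullet> e)) + (xi \<bullet> et) * (et \<bullet> e)) * T x xi
        + (xi \<bullet> e) * Eul xi (\<lambda>v. gdXi v T x xi)"
    using h unfolding Eul_def by (simp add: algebra_simps sum.distrib sum_distrib_left sum_distrib_right)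
  also have "\<dots> = real (Suc m) * ((xi \<bullet> e) * T x xi)" unfolding ie HP_xi.IH by (simp add: algebra_simps)
  finally show ?case .
next
  case (HP_x m T e)
  have h: "hp T" using HP_x.hyps by simp
  have "Eul xi (\<lambda>v. gdXi v (\<lambda>x xi. (x \<bullet> e) * T x xi) x xi) = (x \<bullet> e) * Eul xi (\<lambda>v. gdXi v T x xi)"
    using h unfolding Eul_def by (simp add: algebra_simps sum.distrib sum_distrib_left sum_distrib_right)
  then show ?case using HP_x.IH by simp
next
  case (HP_add m T U)
  have h: "hp T" "hp U" using HP_add.hyps by simp_all
  have "Eul xi (\<lambda>v. gdXi v (\<lambda>x xi. T x xi + U x xi) x xi) = Eul xi (\<lambda>v. gdXi v T x xi) + Eul xi (\<lambda>v. gdXi v U x xi)"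
    using h unfolding Eul_def by (simp add: algebra_simps sum.distrib sum_distrib_left sum_distrib_right)
  then show ?case using HP_add.IH by (simp add: algebra_simps)
next
  case (HP_cmul m T a)
  have h: "hp T" using HP_cmul.hyps by simp
  have "Eul xi (\<lambda>v. gdXi v (\<lambda>x xi. a * T x xi) x xi) = a * Eul xi (\<lambda>v. gdXi v T x xi)"
    using h unfolding Eul_def by (simp add: algebra_simps sum.distrib sum_distrib_left sum_distrib_right)
  then show ?case using HP_cmul.IH by (simp add: algebra_simps)
qed



lemma DXi_L2:
  fixes G G' :: "'n::finite pt \<Rightarrow> 'n pt \<Rightarrow> 'n pt \<Rightarrow> real"
  assumes "\<And>w. w \<in> Basis \<Longrightarrow> DXi v (G w) (G' w)"
  shows "DXi v (\<lambda>x xi. L2 x xi (\<lambda>w. G w x xi)) (\<lambda>x xi. L2 x xi (\<lambda>w. G' w x xi) + L2 x v (\<lambda>w. G w x xi))"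
  unfolding L2_def Esx_def Exi_def
  apply (rule DXi_cong)
   apply (rule DXi_add DXi_diff DXi_mult DXi_sum DXi_inner DXi_xonly assms eq_Basis ep_Basis et_Basis)+
  apply (simp add: algebra_simps sum.distrib sum_subtractf sum_distrib_left sum_distrib_right)
  done

lemma DX_L1:
  fixes G G' :: "'n::finite pt \<Rightarrow> 'n pt \<Rightarrow> 'n pt \<Rightarrow> real"
  assumes "\<And>v. v \<in> Basis \<Longrightarrow> DX w (G v) (G' v)"
  shows "DX w (\<lambda>x xi. L1 x (\<lambda>v. G v x xi)) (\<lambda>x xi. L1 x (\<lambda>v. G' v x xi) + L1lin w (\<lambda>v. G v x xi))"
  unfolding L1_def L1lin_def
  apply (rule DX_cong)
   apply (rule DX_add DX_diff DX_mult DX_sum DX_inner DX_xionly assms eq_Basis ep_Basis et_Basis)+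
  apply (simp add: algebra_simps sum.distrib sum_subtractf sum_distrib_left sum_distrib_right)
  done

lemma G5: "L1 x (\<lambda>v. (v \<bullet> et) * t) = - t"
  unfolding L1_def L1lin_def by simp

lemma L2_cong: "(\<And>w. w \<in> Basis \<Longrightarrow> g w = g' w) \<Longrightarrow> L2 x xi g = L2 x xi g'"
  unfolding L2_def Esx_def by (simp add: eq_Basis ep_Basis et_Basis)
lemma L1_cong: "(\<And>w. w \<in> Basis \<Longrightarrow> g w = g' w) \<Longrightarrow> L1 x g = L1 x g'"
  unfolding L1_def L1lin_def by (simp add: eq_Basis ep_Basis et_Basis)

lemma D1: "hp T \<Longrightarrow> gdXi v (Dop T) = (\<lambda>x xi. L2 x xi (\<lambda>w. gdX w (gdXi v T) x xi) + L2 x v (\<lambda>w. gdX w T x xi))"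
  for T :: "'n::finite sym"
  unfolding Dop_L2
  apply (rule gDXi_eq)
  apply (rule DXi_cong[OF DXi_L2[where G="\<lambda>w. gdX w T" and G'="\<lambda>w. gdXi v (gdX w T)"]])
   apply (rule hp_DXi, simp)
  apply (simp add: comm cong: L2_cong)
  done

lemma D2: "hp T \<Longrightarrow> w \<in> Basis \<Longrightarrow> gdX w (ia T) = (\<lambda>x xi. (1/2) * (L1 x (\<lambda>v. gdX w (gdXi v T) x xi) + L1lin w (\<lambda>v. gdXi v T x xi)))"
  for T :: "'n::finite sym"
  unfolding ia_L1
  apply (rule gDX_eq)
  apply (rule DX_cmul[OF DX_L1[where G="\<lambda>v. gdXi v T" and G'="\<lambda>v. gdX w (gdXi v T)"]])
  apply (rule hp_DX, simp_all)
  done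

lemma key:
  fixes T :: "'n::finite sym"
  assumes T: "HP m T"
  shows "ia (Xop \<delta> m T) x xi = Xop \<delta> (m - 1) (ia T) x xi - ((real CARD('n) + 1) * \<delta> + real m) * T x xi"
proof -
  have h: "hp T" using T by simp
  have hD: "hp (Dop T)" using HP_Dop[OF T] by simp
  define C where "C = 2 * (real CARD('n) + 1) * \<delta> + real m"
  define t where "t = T x xi"
  define b where "b = (\<lambda>v. gdXi v T x xi)"
  define a where "a = (\<lambda>w. gdX w T x xi)"
  define c where "c = (\<lambda>v w. gdX w (gdXi v T) x xi)"
  have X: "gdXi v (Xop \<delta> m T) x xi = L2 x xi (\<lambda>w. c v w) + L2 x v a + C * ((v \<bullet> et) * t + (xi \<bullet> et) * b v)" for v
    unfolding Xop_alt using h hD by (simp add: D1 C_def t_def b_def a_def c_def)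
  have LHS: "ia (Xop \<delta> m T) x xi = (1/2) * (L2 x xi (\<lambda>w. L1 x (\<lambda>v. c v w)) + C * (- t + (xi \<bullet> et) * L1 x b))"
    unfolding ia_L1 X by (simp add: L1_add L1_cmul G1 G2 G5)
  have D: "gdX w (ia T) x xi = (1/2) * (L1 x (\<lambda>v. c v w) + L1lin w b)" if "w \<in> Basis" for w
    using D2[OF h that] by (simp add: c_def b_def)
  have Dia: "Dop (ia T) x xi = (1/2) * (L2 x xi (\<lambda>w. L1 x (\<lambda>v. c v w)) + real m * t + (xi \<bullet> et) * L1 x b)"
  proof -
    have "Dop (ia T) x xi = L2 x xi (\<lambda>w. (1/2) * (L1 x (\<lambda>v. c v w) + L1lin w b))"
      unfolding Dop_L2 by (rule L2_cong) (simp add: D)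
    also have "\<dots> = (1/2) * (L2 x xi (\<lambda>w. L1 x (\<lambda>v. c v w)) + Eul xi b + (xi \<bullet> et) * L1 x b)"
      by (simp only: L2_cmul L2_add G3 add.assoc)
    also have "Eul xi b = real m * t" unfolding b_def t_def by (rule Euler_HP[OF T])
    finally show ?thesis by simp
  qed
  have iaT: "ia T x xi = (1/2) * L1 x b" unfolding ia_L1 b_def by simp
  have Xm: "Xop \<delta> (m - 1) (ia T) x xi = Dop (ia T) x xi + (2 * (real CARD('n) + 1) * \<delta> + real (m - 1)) * ((xi \<bullet> et) * ia T x xi)"
    unfolding Xop_alt by simp
  show ?thesis
  proof (cases m)
    case 0
    then have "b = (\<lambda>v. 0)" unfolding b_def using HP_dXi[OF T] by (auto simp: fun_eq_iff)
    then have "L1 x b = 0" unfolding L1_def L1lin_def by simp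
    then show ?thesis unfolding LHS Xm Dia iaT using 0 by (simp add: C_def t_def algebra_simps)
  next
    case (Suc k)
    then have "real (m - 1) = real m - 1" by simp
    then show ?thesis unfolding LHS Xm Dia iaT by (simp add: C_def t_def algebra_simps)
  qed
qed



lemma ia_lin: "hp A \<Longrightarrow> hp B \<Longrightarrow> ia (\<lambda>x xi. A x xi + c * B x xi) x xi = ia A x xi + c * ia B x xi"
  for A B :: "'n::finite sym"
  unfolding ia_L1 by (simp add: L1_add L1_cmul algebra_simps)

lemma Xop_lin: "hp A \<Longrightarrow> hp B \<Longrightarrow> Xop \<delta> j (\<lambda>x xi. A x xi + c * B x xi) x xi = Xop \<delta> j A x xi + c * Xop \<delta> j B x xi"
  for A B :: "'n::finite sym"
proof -
  assume a: "hp A" "hp B"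
  have "Dop (\<lambda>x xi. A x xi + c * B x xi) x xi = Dop A x xi + c * Dop B x xi"
    unfolding Dop_L2
  proof -
    have "L2 x xi (\<lambda>w. gdX w (\<lambda>x xi. A x xi + c * B x xi) x xi) = L2 x xi (\<lambda>w. gdX w A x xi + c * gdX w B x xi)"
      by (rule L2_cong) (simp add: a)
    then show "L2 x xi (\<lambda>w. gdX w (\<lambda>x xi. A x xi + c * B x xi) x xi) = L2 x xi (\<lambda>w. gdX w A x xi) + c * L2 x xi (\<lambda>w. gdX w B x xi)"
      by (simp add: L2_add L2_cmul)
  qed
  then show ?thesis unfolding Xop_alt by (simp add: algebra_simps)
qed

lemma ia_zero: "ia (\<lambda>x xi. 0) = (\<lambda>x xi. 0)"
  unfolding ia_L1 L1_def L1lin_def by simp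

lemma Xop_zero: "Xop \<delta> j (\<lambda>x xi. 0) = (\<lambda>x (xi::'n::finite pt). 0)"
  unfolding Xop_alt Dop_L2 L2_def Esx_def by simp

lemma Xpow_zero: "Xpow \<delta> m l (\<lambda>x xi. 0) = (\<lambda>x (xi::'n::finite pt). 0)"
  by (induction l) (simp_all add: Xop_zero)

lemma HP_Xpow: "HP m T \<Longrightarrow> HP (m + l) (Xpow \<delta> m l T)"
  for T :: "'n::finite sym"
proof (induction l)
  case 0 then show ?case by simp
next
  case (Suc l) then show ?case using HP_Xop[OF Suc.IH, of \<delta> "m + l"] by simp
qed

lemma HP_iapow: "HP m T \<Longrightarrow> HP (m - l) ((ia ^^ l) T)"
  for T :: "'n::finite sym"
proof (induction l)
  case 0 then show ?case by simp
next
  case (Suc l) then show ?case using HP_ia[OF Suc.IH] by simp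
qed

lemma ia_HP0: "HP 0 T \<Longrightarrow> ia T = (\<lambda>x xi. 0)"
  for T :: "'n::finite sym"
proof -
  assume T0: "HP 0 T"
  have "gdXi v T = (\<lambda>x xi. 0)" for v using HP_dXi[OF T0, of v] by simp
  then show ?thesis unfolding ia_L1 L1_def L1lin_def by simp
qed

lemma rr_step: "rr n \<delta> (Suc l) m = rr n \<delta> l m - ((real n + 1) * \<delta> + real (m + l))"
  unfolding rr_def by (simp add: field_simps)

lemma M:
  fixes T :: "'n::finite sym"
  assumes T: "HP m T"
  shows "ia (Xpow \<delta> m l T) x xi = Xpow \<delta> (m - 1) l (ia T) x xi + rr CARD('n) \<delta> l m * Xpow \<delta> m (l - 1) T x xi"
proof (induction l arbitrary: x xi)
  case 0
  then show ?case by (simp add: rr_def)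
next
  case (Suc l)
  have H: "HP (m + l) (Xpow \<delta> m l T)" by (rule HP_Xpow[OF T])
  have hI: "hp (Xpow \<delta> (m - 1) l (ia T))" by (rule hp_HP[OF HP_Xpow[OF HP_ia[OF T]]])
  have hP: "hp (Xpow \<delta> m (l - 1) T)" by (rule hp_HP[OF HP_Xpow[OF T]])
  have IH: "ia (Xpow \<delta> m l T) = (\<lambda>x xi. Xpow \<delta> (m - 1) l (ia T) x xi + rr CARD('n) \<delta> l m * Xpow \<delta> m (l - 1) T x xi)"
    using Suc.IH by (intro ext)
  have "ia (Xpow \<delta> m (Suc l) T) x xi = ia (Xop \<delta> (m + l) (Xpow \<delta> m l T)) x xi" by simp
  also have "\<dots> = Xop \<delta> (m + l - 1) (ia (Xpow \<delta> m l T)) x xi - ((real CARD('n) + 1) * \<delta> + real (m + l)) * Xpow \<delta> m l T x xi"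
    by (rule key[OF H])
  also have "Xop \<delta> (m + l - 1) (ia (Xpow \<delta> m l T)) x xi
      = Xop \<delta> (m + l - 1) (Xpow \<delta> (m - 1) l (ia T)) x xi + rr CARD('n) \<delta> l m * Xop \<delta> (m + l - 1) (Xpow \<delta> m (l - 1) T) x xi"
    unfolding IH by (rule Xop_lin[OF hI hP])
  also have "Xop \<delta> (m + l - 1) (Xpow \<delta> (m - 1) l (ia T)) x xi = Xpow \<delta> (m - 1) (Suc l) (ia T) x xi"
  proof (cases m)
    case 0
    then have "ia T = (\<lambda>x xi. 0)" using ia_HP0 T by simp
    then show ?thesis by (simp add: Xpow_zero Xop_zero)
  next
    case (Suc k) then show ?thesis by simp
  qed
  also have "rr CARD('n) \<delta> l m * Xop \<delta> (m + l - 1) (Xpow \<delta> m (l - 1) T) x xi = rr CARD('n) \<delta> l m * Xpow \<delta> m l T x xi"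
  proof (cases l)
    case 0 then show ?thesis by (simp add: rr_def)
  next
    case (Suc j) then show ?thesis by simp
  qed
  finally show ?case by (simp add: rr_step algebra_simps)
qed



lemma L1_sum: "L1 x (\<lambda>w. \<Sum>i\<in>I. f i w) = (\<Sum>i\<in>I. L1 x (f i))"
  unfolding L1_def L1lin_def
  by (simp add: sum.distrib algebra_simps sum_subtractf sum_distrib_left sum.swap[of _ I])

lemma ia_sum: "(\<And>l. l \<in> I \<Longrightarrow> hp (F l)) \<Longrightarrow> ia (\<lambda>x xi. \<Sum>l\<in>I. c l * F l x xi) x xi = (\<Sum>l\<in>I. c l * ia (F l) x xi)"
  for F :: "nat \<Rightarrow> 'n::finite sym"
  unfolding ia_L1 by (simp add: L1_sum L1_cmul sum_distrib_left algebra_simps)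

lemma telescope: "(\<Sum>l\<in>{1..k}. g (l - 1) - g l) = g 0 - (g k :: real)" for k :: nat
  by (induction k) simp_all

lemma bb_step:
  assumes "1 \<le> l" "rr n \<delta> l (k - l) \<noteq> 0"
  shows "- bb n \<delta> k l * rr n \<delta> l (k - l) = bb n \<delta> k (l - 1)"
proof -
  obtain j where l: "l = Suc j" using assms(1) by (cases l) auto
  have "(\<Prod>i=1..l. - rr n \<delta> i (k - i)) = (\<Prod>i=1..j. - rr n \<delta> i (k - i)) * (- rr n \<delta> l (k - l))"
    unfolding l by (simp add: prod.cl_ivl_Suc)
  then show ?thesis unfolding bb_def using assms(2) l by (simp add: field_simps)
qed

lemma rr_nonzero:
  assumes "\<delta> \<notin> Iset n k" "1 \<le> l" "l \<le> k"
  shows "rr n \<delta> l (k - l) \<noteq> 0"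
proof
  assume "rr n \<delta> l (k - l) = 0"
  then have "2 * (real n + 1) * \<delta> + 2 * real (k - l) + real l - 1 = 0"
    unfolding rr_def using assms(2) by simp
  then have e: "\<delta> = - real (2 * k - l - 1) / (2 * (real n + 1))"
    using assms(2,3) by (simp add: of_nat_diff field_simps)
  have "2 * k - l - 1 \<in> {k - 1 .. 2 * k - 2}" using assms(2,3) by auto
  then have "\<delta> \<in> Iset n k" unfolding Iset_def e by blast
  then show False using assms(1) by simp
qed

lemma final_HP:
  fixes \<delta> :: real and k :: nat and S :: "'n::finite sym"
  assumes k: "k \<ge> 1" and d: "\<delta> \<notin> Iset CARD('n) k" and S: "HP (k - 1) S"
  shows "ia (s_op \<delta> k S) = S"
proof (intro ext)
  fix x xi :: "'n pt"
  define n where "n = CARD('n)"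
  define F where "F = (\<lambda>l. Xpow \<delta> (k - l) l ((ia ^^ (l - 1)) S))"
  define A where "A = (\<lambda>j. Xpow \<delta> (k - 1 - j) j ((ia ^^ j) S) x xi)"
  define b where "b = (\<lambda>l. bb n \<delta> k l)"
  have HPi: "HP (k - l) ((ia ^^ (l - 1)) S)" if "1 \<le> l" "l \<le> k" for l
    using HP_iapow[OF S, of "l - 1"] that by (simp add: diff_diff_add)
  have hF: "hp (F l)" if "l \<in> {1..k}" for l
    unfolding F_def using that by (intro hp_HP[OF HP_Xpow[OF HPi]]) auto
  have sop: "s_op \<delta> k S = (\<lambda>x xi. \<Sum>l\<in>{1..k}. (- b l) * F l x xi)"
    unfolding s_op_def F_def b_def n_def by (simp add: sum_negf)
  have iaF: "ia (F l) x xi = A l + rr n \<delta> l (k - l) * A (l - 1)" if l: "l \<in> {1..k}" for l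
  proof -
    have HPl: "HP (k - l) ((ia ^^ (l - 1)) S)" using HPi l by simp
    have "ia (F l) x xi = Xpow \<delta> (k - l - 1) l (ia ((ia ^^ (l - 1)) S)) x xi + rr n \<delta> l (k - l) * Xpow \<delta> (k - l) (l - 1) ((ia ^^ (l - 1)) S) x xi"
      unfolding F_def n_def by (rule M[OF HPl])
    moreover obtain j where j: "l = Suc j" using l by (cases l) auto
    moreover have "ia ((ia ^^ (l - 1)) S) = (ia ^^ l) S" unfolding j by simp
    moreover have "k - l = k - 1 - (l - 1)" "k - l - 1 = k - 1 - l" using l by auto
    ultimately show ?thesis unfolding A_def by simp
  qed
  have "ia (s_op \<delta> k S) x xi = (\<Sum>l\<in>{1..k}. (- b l) * ia (F l) x xi)"
    unfolding sop by (rule ia_sum) (rule hF)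
  also have "\<dots> = (\<Sum>l\<in>{1..k}. b (l - 1) * A (l - 1) - b l * A l)"
  proof (rule sum.cong[OF refl])
    fix l assume l: "l \<in> {1..k}"
    have e: "- b l * rr n \<delta> l (k - l) = b (l - 1)"
      unfolding b_def using bb_step[of l n \<delta> k] rr_nonzero[of \<delta> n k l] d l by (simp add: n_def)
    then show "(- b l) * ia (F l) x xi = b (l - 1) * A (l - 1) - b l * A l"
      unfolding iaF[OF l] e[symmetric] by (simp add: algebra_simps)
  qed
  also have "\<dots> = b 0 * A 0 - b k * A k" by (rule telescope)
  also have "b 0 = 1" unfolding b_def bb_def by simp
  also have "A 0 = S x xi" unfolding A_def by simp
  also have "A k = 0"
  proof -
    have "HP 0 ((ia ^^ (k - 1)) S)" using HP_iapow[OF S, of "k - 1"] by simp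
    moreover obtain j where j: "k = Suc j" using k by (cases k) auto
    ultimately have "(ia ^^ k) S = (\<lambda>x xi. 0)" using ia_HP0 by simp
    then show ?thesis unfolding A_def by (simp add: Xpow_zero)
  qed
  finally show "ia (s_op \<delta> k S) x xi = S x xi" by simp
qed



primrec dXis :: "'b::real_normed_vector list \<Rightarrow> ('a \<Rightarrow> 'b \<Rightarrow> real) \<Rightarrow> ('a \<Rightarrow> 'b \<Rightarrow> real)" where
  "dXis [] T = T"
| "dXis (b # bs) T = gdXi b (dXis bs T)"

lemma dXis_snoc: "dXis (bs @ [v]) T = dXis bs (gdXi v T)"
  by (induction bs) simp_all

lemma dXis_iter:
  fixes T :: "'a::euclidean_space \<Rightarrow> 'b::euclidean_space \<Rightarrow> real"
  shows "dXis bs T x xi = iter_pd (map (\<lambda>b. (0::'a, b)) bs) (\<lambda>(x, xi). T x xi) (x, xi)"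
proof (induction bs arbitrary: x xi)
  case Nil then show ?case by simp
next
  case (Cons b bs)
  have e: "(x, xi) + h *\<^sub>R (0::'a, b) = (x, xi + h *\<^sub>R b)" for h by simp
  show ?case by (simp add: gdXi_def Cons.IH e)
qed

lemma HP0_const: "HP m U \<Longrightarrow> m = 0 \<Longrightarrow> U x xi = U x 0"
proof (induction arbitrary: x xi rule: HP.induct)
  case (HP_x m T e) then show ?case by simp
next
  case (HP_add m T U) then show ?case
    using HP_add.IH(1)[OF HP_add.prems, of x xi] HP_add.IH(2)[OF HP_add.prems, of x xi] by linarith
next
  case (HP_cmul m T a) then show ?case by simp
qed simp_all

lemma HP_xipow: "HP m T \<Longrightarrow> HP (m + j) (\<lambda>x xi. (xi \<bullet> b) ^ j * T x xi)"
proof (induction j)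
  case 0 then show ?case by simp
next
  case (Suc j)
  have "HP (Suc (m + j)) (\<lambda>x xi. (xi \<bullet> b) * ((xi \<bullet> b) ^ j * T x xi))" by (rule HP_xi[OF Suc.IH[OF Suc.prems]])
  then have "HP (m + Suc j) (\<lambda>x xi. (xi \<bullet> b) * ((xi \<bullet> b) ^ j * T x xi))" by simp
  then show ?case by (rule HP_eq) simp
qed

lemma HP_monom_aux: "finite B \<Longrightarrow> HP (\<Sum>b\<in>B. \<alpha> b) (\<lambda>(x::'a::euclidean_space) (xi::'b::euclidean_space). \<Prod>b\<in>B. (xi \<bullet> b) ^ \<alpha> b)"
proof (induction rule: finite_induct)
  case empty
  show ?case using HP_const[OF Sm_const[where a=1]] by simp
next
  case (insert b B)
  have "HP ((\<Sum>b\<in>B. \<alpha> b) + \<alpha> b) (\<lambda>(x::'a) (xi::'b). (xi \<bullet> b) ^ \<alpha> b * (\<Prod>b\<in>B. (xi \<bullet> b) ^ \<alpha> b))"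
    by (rule HP_xipow[OF insert.IH])
  then show ?case using insert.hyps by (simp add: add.commute)
qed

lemma HP_monom: "\<alpha> \<in> multiidx m \<Longrightarrow> HP m (\<lambda>x xi. monom \<alpha> (xi::'n::finite pt))"
  unfolding multiidx_def monom_def using HP_monom_aux[of Basis \<alpha>] by auto

lemma HP_fixed:
  fixes S :: "'n::finite sym"
  assumes "hom_poly m S"
  shows "HP m (\<lambda>(x::'n pt) xi. S x0 xi)"
proof -
  obtain c where c: "\<And>x xi. S x xi = (\<Sum>\<alpha>\<in>multiidx m. c \<alpha> x * monom \<alpha> xi)"
    using assms unfolding hom_poly_def by blast
  have "HP m (\<lambda>x xi. \<Sum>\<alpha>\<in>multiidx m. c \<alpha> x0 * monom \<alpha> xi)"
  proof (cases "finite (multiidx m :: ('n pt \<Rightarrow> nat) set)")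
    case True
    then show ?thesis by (intro HP_sum HP_cmul HP_monom)
  next
    case False
    then show ?thesis using HP_zero by simp
  qed
  then show ?thesis by (rule HP_eq) (simp add: c)
qed

lemma taylor:
  fixes T :: "'n::finite sym"
  shows "(\<And>x0. HP m (\<lambda>(x::'n pt) xi. T x0 xi)) \<Longrightarrow> (\<And>bs. set bs \<subseteq> Basis \<Longrightarrow> Sm (\<lambda>x. dXis bs T x 0)) \<Longrightarrow> HP m T"
proof (induction m arbitrary: T)
  case 0
  have "HP 0 (\<lambda>x xi. dXis [] T x 0)" using "0.prems"(2)[of "[]"] by (intro HP_const) simp
  then show ?case
  proof (rule HP_eq)
    fix x xi
    have "(\<lambda>x' xi'. T x xi') x xi = (\<lambda>x' xi'. T x xi') x 0" by (rule HP0_const[OF "0.prems"(1)]) simp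
    then have "T x xi = T x 0" by simp
    then show "dXis [] T x 0 = T x xi" by simp
  qed
next
  case (Suc m)
  have dv: "gdXi v (\<lambda>x xi. T x0 xi) = (\<lambda>x xi. gdXi v T x0 xi)" for v x0
    unfolding gdXi_def by simp
  have IHv: "HP m (gdXi v T)" if "v \<in> Basis" for v
  proof (rule Suc.IH)
    show "HP m (\<lambda>(x::'n pt) xi. gdXi v T x0 xi)" for x0
      using HP_dXi[OF Suc.prems(1)[of x0], of v] unfolding dv by simp
    show "Sm (\<lambda>x. dXis bs (gdXi v T) x 0)" if "set bs \<subseteq> Basis" for bs
      using Suc.prems(2)[of "bs @ [v]"] that \<open>v \<in> Basis\<close> by (simp add: dXis_snoc)
  qed
  have E: "Eul xi (\<lambda>v. gdXi v T x0 xi) = real (Suc m) * T x0 xi" for x0 xi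
    using Euler_HP[OF Suc.prems(1)[of x0], of xi x0] unfolding dv .
  have "HP (Suc m) (\<lambda>x xi. (1 / real (Suc m)) * ((\<Sum>j\<in>UNIV. (xi \<bullet> eq j) * gdXi (eq j) T x xi + (xi \<bullet> ep j) * gdXi (ep j) T x xi) + (xi \<bullet> et) * gdXi et T x xi))"
    by (intro HP_cmul HP_add HP_sum HP_xi IHv eq_Basis ep_Basis et_Basis) simp
  then show ?case
  proof (rule HP_eq)
    fix x xi
    show "1 / real (Suc m) * ((\<Sum>j\<in>UNIV. (xi \<bullet> eq j) * gdXi (eq j) T x xi + (xi \<bullet> ep j) * gdXi (ep j) T x xi) + (xi \<bullet> et) * gdXi et T x xi) = T x xi"
      using E[of xi x] unfolding Eul_def by (simp add: field_simps)
  qed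
qed

lemma bridge:
  fixes S :: "'n::finite sym"
  assumes "S \<in> Rsp m"
  shows "HP m S"
proof (rule taylor)
  have sm: "smooth (\<lambda>(x, xi). S x xi)" and hp: "hom_poly m S" using assms unfolding Rsp_def by auto
  show "HP m (\<lambda>(x::'n pt) xi. S x0 xi)" for x0 by (rule HP_fixed[OF hp])
  show "Sm (\<lambda>x. dXis bs S x 0)" if "set bs \<subseteq> Basis" for bs
  proof -
    have "set (map (\<lambda>b. (0::'n pt, b)) bs) \<subseteq> Basis" using that by (auto simp: Basis_prod_def)
    then show ?thesis unfolding dXis_iter by (rule Sm_iter[OF sm])
  qed
qed


theorem lemma5p1:
  fixes \<delta> :: real and k :: nat and S :: "'n::finite sym"
  assumes "k \<ge> 1"
    and "\<delta> \<notin> Iset CARD('n) k"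
    and "S \<in> Rsp (k - 1)"
  shows "ia (s_op \<delta> k S) = S"
  by (rule final_HP[OF assms(1) assms(2) bridge[OF assms(3)]])

end
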